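(* Consider any instance of the rescheduling problem $(1, h_1 \mid \Delta_{\max}\le k \mid \sum_{j=1}^n w_j C_j)$ (i.e., $\mu=0$) described in the context, and suppose it admits a feasible schedule. Then there exists an optimal schedule $\sigma^*$ such that, if the earlier schedule of $\sigma^*$ contains an idle period, then $\Delta_{\max}(\sigma^* )=k$.
   Context: An instance consists of $n$ jobs $J_1,\dots,J_n$, where $J_j$ has a positive integer processing time $p_j$ and positive integer weight $w_j$, indexed so that $p_1/w_1\le\cdots\le p_n/w_n$; integers $0\le T_1<T_2$ (machine unavailable during $[T_1,T_2]$); an integer $k$. The original schedule $\pi^*$ processes $J_1,\dots,J_n$ in order consecutively from time $0$ without idling, so $S_j(\pi^* )=\sum_{i<j}p_i$, $C_j(\pi^* )=\sum_{i\le j}p_i$. A schedule $\sigma$ gives start times $S_j(\sigma)\ge0$, non-preemptive single-machine processing, $C_j(\sigma)=S_j(\sigma)+p_j$, no overlaps, and each job has $C_j(\sigma)\le T_1$ or $S_j(\sigma)\ge T_2$. $\Delta_j=|C_j(\sigma)-C_j(\pi^* )|$, $\Delta_{\max}=\max_j\Delta_j$. Feasible means $\Delta_{\max}\le k$; optimal means feasible and minimizing $\sum_j w_jC_j(\sigma)$. The earlier schedule consists of jobs with $C_j(\sigma)\le T_1$. An idle period of the earlier schedule is a maximal time interval of positive length within $[0,c]$, where $c$ is the largest completion time of an earlier-schedule job, during which no job is processed. Standing assumptions: some job has $C_j(\pi^* )>T_1$; with $j_1$ the smallest such index, $\min_jp_j\le T_1<\sum_jp_j$ and $T_2-S_{j_1}(\pi^*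 )\le k$. *)

theory Defs
  imports Complex_Main
begin

definition C_orig :: "(nat \<Rightarrow> nat) \<Rightarrow> nat \<Rightarrow> nat" where
  "C_orig p j = (\<Sum>i\<in>{1..j}. p i)"

definition S_orig :: "(nat \<Rightarrow> nat) \<Rightarrow> nat \<Rightarrow> nat" where
  "S_orig p j = (\<Sum>i\<in>{1..<j}. p i)"

definition compl :: "(nat \<Rightarrow> nat) \<Rightarrow> (nat \<Rightarrow> real) \<Rightarrow> nat \<Rightarrow> real" where
  "compl p S j = S j + real (p j)"

definition valid_schedule ::
  "nat \<Rightarrow> (nat \<Rightarrow> nat) \<Rightarrow> nat \<Rightarrow> nat \<Rightarrow> (nat \<Rightarrow> real) \<Rightarrow> bool" where
  "valid_schedule n p T1 T2 S \<longleftrightarrow>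
     (\<forall>j\<in>{1..n}. S j \<ge> 0) \<and>
     (\<forall>i\<in>{1..n}. \<forall>j\<in>{1..n}. i \<noteq> j \<longrightarrow> compl p S i \<le> S j \<or> compl p S j \<le> S i) \<and>
     (\<forall>j\<in>{1..n}. compl p S j \<le> real T1 \<or> S j \<ge> real T2)"

definition Delta :: "(nat \<Rightarrow> nat) \<Rightarrow> (nat \<Rightarrow> real) \<Rightarrow> nat \<Rightarrow> real" where
  "Delta p S j = \<bar>compl p S j - real (C_orig p j)\<bar>"

definition Delta_max :: "nat \<Rightarrow> (nat \<Rightarrow> nat) \<Rightarrow> (nat \<Rightarrow> real) \<Rightarrow> real" where
  "Delta_max n p S = Max (Delta p S ` {1..n})"

definition feasible ::
  "nat \<Rightarrow> (nat \<Rightarrow> nat) \<Rightarrow> nat \<Rightarrow> nat \<Rightarrow> int \<Rightarrow> (nat \<Rightarrow> real) \<Rightarrow> bool" where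
  "feasible n p T1 T2 k S \<longleftrightarrow> valid_schedule n p T1 T2 S \<and> Delta_max n p S \<le> real_of_int k"

definition wct :: "nat \<Rightarrow> (nat \<Rightarrow> nat) \<Rightarrow> (nat \<Rightarrow> nat) \<Rightarrow> (nat \<Rightarrow> real) \<Rightarrow> real" where
  "wct n p w S = (\<Sum>j\<in>{1..n}. real (w j) * compl p S j)"

definition optimal ::
  "nat \<Rightarrow> (nat \<Rightarrow> nat) \<Rightarrow> (nat \<Rightarrow> nat) \<Rightarrow> nat \<Rightarrow> nat \<Rightarrow> int \<Rightarrow> (nat \<Rightarrow> real) \<Rightarrow> bool" where
  "optimal n p w T1 T2 k S \<longleftrightarrow> feasible n p T1 T2 k S \<and>
     (\<forall>S'. feasible n p T1 T2 k S' \<longrightarrow> wct n p w S \<le> wct n p w S')"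

definition earlier_jobs :: "nat \<Rightarrow> (nat \<Rightarrow> nat) \<Rightarrow> nat \<Rightarrow> (nat \<Rightarrow> real) \<Rightarrow> nat set" where
  "earlier_jobs n p T1 S = {j\<in>{1..n}. compl p S j \<le> real T1}"

definition earlier_end :: "nat \<Rightarrow> (nat \<Rightarrow> nat) \<Rightarrow> nat \<Rightarrow> (nat \<Rightarrow> real) \<Rightarrow> real" where
  "earlier_end n p T1 S = Max (compl p S ` earlier_jobs n p T1 S)"

definition idle_on :: "nat \<Rightarrow> (nat \<Rightarrow> nat) \<Rightarrow> (nat \<Rightarrow> real) \<Rightarrow> real \<Rightarrow> real \<Rightarrow> bool" where
  "idle_on n p S a b \<longleftrightarrow> (\<forall>t. a < t \<and> t < b \<longrightarrow> (\<forall>j\<in>{1..n}. \<not> (S j < t \<and> t < compl p S j)))"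

definition idle_period ::
  "nat \<Rightarrow> (nat \<Rightarrow> nat) \<Rightarrow> nat \<Rightarrow> (nat \<Rightarrow> real) \<Rightarrow> real \<Rightarrow> real \<Rightarrow> bool" where
  "idle_period n p T1 S a b \<longleftrightarrow>
     earlier_jobs n p T1 S \<noteq> {} \<and>
     0 \<le> a \<and> a < b \<and> b \<le> earlier_end n p T1 S \<and> idle_on n p S a b \<and>
     (\<forall>a' b'. 0 \<le> a' \<and> a' \<le> a \<and> b \<le> b' \<and> b' \<le> earlier_end n p T1 S \<and> idle_on n p S a' b'
        \<longrightarrow> a' = a \<and> b' = b)"

definition has_idle_period :: "nat \<Rightarrow> (nat \<Rightarrow> nat) \<Rightarrow> nat \<Rightarrow> (nat \<Rightarrow> real) \<Rightarrow> bool" where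
  "has_idle_period n p T1 S \<longleftrightarrow> (\<exists>a b. idle_period n p T1 S a b)"

end

theory Submission
  imports Defs "HOL-Analysis.Analysis"
begin

lemma cpt: "compact (Pi\<^sub>E UNIV (\<lambda>_::nat. {0..M::real}))"
proof -
  have "compactin (product_topology (\<lambda>i. euclidean) UNIV) (Pi\<^sub>E UNIV (\<lambda>_::nat. {0..M::real}))"
    by (simp add: compactin_PiE)
  then show ?thesis by (simp add: euclidean_product_topology)
qed

lemma cont_coord: "continuous_on UNIV (\<lambda>S::nat\<Rightarrow>real. S j)" by simp

lemma closed_F: "closed {S::nat\<Rightarrow>real. valid_schedule n p T1 T2 S \<and> (\<forall>j\<in>{1..n}. Delta p S j \<le> K) \<and> (\<forall>j. j \<notin> {1..n} \<longrightarrow> S j = 0)}"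
  unfolding valid_schedule_def Delta_def compl_def Ball_def
  by (intro closed_Collect_conj closed_Collect_all closed_Collect_imp closed_Collect_disj
      closed_Collect_le closed_Collect_eq open_Collect_const continuous_intros cont_coord)

lemma Dmax_le:
  assumes "n \<ge> 1"
  shows "Delta_max n p S \<le> K \<longleftrightarrow> (\<forall>j\<in>{1..n}. Delta p S j \<le> K)"
  unfolding Delta_max_def using assms by (subst Max_le_iff) auto

lemma Dmax_ge:
  assumes "j \<in> {1..n}"
  shows "Delta p S j \<le> Delta_max n p S"
  unfolding Delta_max_def using assms by (intro Max_ge) auto

lemma idle_shift:
  assumes val: "valid_schedule n p T1 T2 S" and ppos: "\<forall>j\<in>{1..n}. p j > 0"
    and T12: "T1 < T2" and ip: "idle_period n p T1 S a b"
  shows "\<exists>j1\<in>{1..n}. S j1 = b \<and> compl p S j1 \<le> real T1 \<and>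
          (\<forall>i\<in>{1..n}. i \<noteq> j1 \<longrightarrow> compl p S i \<le> a \<or> compl p S j1 \<le> S i)"
proof -
  define E where "E = earlier_jobs n p T1 S"
  define c where "c = earlier_end n p T1 S"
  have Ene: "E \<noteq> {}" and a0: "0 \<le> a" and ab: "a < b" and bc: "b \<le> c"
    and idle: "idle_on n p S a b"
    and maxi: "\<And>a' b'. 0 \<le> a' \<Longrightarrow> a' \<le> a \<Longrightarrow> b \<le> b' \<Longrightarrow> b' \<le> c \<Longrightarrow> idle_on n p S a' b'
        \<Longrightarrow> a' = a \<and> b' = b"
    using ip unfolding idle_period_def E_def c_def by blast+
  have finE: "finite E" unfolding E_def earlier_jobs_def by auto
  have "c \<in> compl p S ` E" unfolding c_def earlier_end_def E_def[symmetric]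
    using finE Ene by (intro Max_in) auto
  then obtain j0 where j0E: "j0 \<in> E" and cj0: "compl p S j0 = c" by auto
  have j0n: "j0 \<in> {1..n}" and cT1: "c \<le> real T1"
    using j0E cj0 unfolding E_def earlier_jobs_def by auto
  have A: "compl p S i \<le> a" if "i \<in> {1..n}" "S i < b" for i
  proof (rule ccontr)
    assume "\<not> compl p S i \<le> a"
    hence ca: "compl p S i > a" by simp
    have "S i < compl p S i" using ppos that(1) unfolding compl_def by auto
    define t where "t = (max a (S i) + min b (compl p S i)) / 2"
    have "a < t" "t < b" "S i < t" "t < compl p S i"
      using ca ab that(2) \<open>S i < compl p S i\<close> unfolding t_def by (auto simp: max_def min_def)
    then show False using idle that(1) unfolding idle_on_def by blast
  qed
  have pj0: "S j0 < compl p S j0" using ppos j0n unfolding compl_def by auto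
  have Sj0: "b \<le> S j0"
  proof (rule ccontr)
    assume "\<not> b \<le> S j0"
    hence "compl p S j0 \<le> a" using A j0n by auto
    thus False using cj0 ab bc by auto
  qed
  define J where "J = {i\<in>{1..n}. b \<le> S i}"
  have finJ: "finite J" and Jne: "J \<noteq> {}" using j0n Sj0 unfolding J_def by auto
  define m where "m = Min (S ` J)"
  have mge: "b \<le> m" unfolding m_def using finJ Jne by (subst Min_ge_iff) (auto simp: J_def)
  have mle: "m \<le> S j0" unfolding m_def using finJ j0n Sj0 by (intro Min_le) (auto simp: J_def)
  have mS: "m \<le> S i" if "i \<in> J" for i unfolding m_def using finJ that by (intro Min_le) auto
  have mb: "m = b"
  proof (rule ccontr)
    assume "m \<noteq> b"
    have "idle_on n p S a m" unfolding idle_on_def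
    proof (intro allI impI ballI)
      fix t i assume t: "a < t \<and> t < m" and i: "i \<in> {1..n}"
      show "\<not> (S i < t \<and> t < compl p S i)"
      proof (cases "S i < b")
        case True then show ?thesis using A[OF i] t by auto
      next
        case False then have "i \<in> J" using i unfolding J_def by auto
        then show ?thesis using mS t by fastforce
      qed
    qed
    then have "m = b" using maxi[of a m] a0 mge mle pj0 cj0 by auto
    then show False using \<open>m \<noteq> b\<close> by simp
  qed
  have "m \<in> S ` J" unfolding m_def using finJ Jne by (intro Min_in) auto
  then obtain j1 where j1J: "j1 \<in> J" and Sj1: "S j1 = b" using mb by auto
  have j1n: "j1 \<in> {1..n}" using j1J unfolding J_def by auto
  have "compl p S j1 \<le> real T1 \<or> S j1 \<ge> real T2" using val j1n unfolding valid_schedule_def by auto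
  hence cj1: "compl p S j1 \<le> real T1" using Sj1 bc cT1 T12 by auto
  have "\<forall>i\<in>{1..n}. i \<noteq> j1 \<longrightarrow> compl p S i \<le> a \<or> compl p S j1 \<le> S i"
  proof (intro ballI impI)
    fix i assume i: "i \<in> {1..n}" "i \<noteq> j1"
    have "compl p S i \<le> S j1 \<or> compl p S j1 \<le> S i"
      using val i j1n unfolding valid_schedule_def by auto
    moreover have "S i < compl p S i" using ppos i unfolding compl_def by auto
    ultimately show "compl p S i \<le> a \<or> compl p S j1 \<le> S i" using A[OF i(1)] Sj1 by auto
  qed
  then show ?thesis using j1n Sj1 cj1 by blast
qed

theorem lemma6:
  fixes n :: nat and p w :: "nat \<Rightarrow> nat" and T1 T2 :: nat and k :: int
  assumes p_pos: "\<forall>j\<in>{1..n}. p j > 0"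
    and w_pos: "\<forall>j\<in>{1..n}. w j > 0"
    and ordered: "\<forall>i\<in>{1..n}. \<forall>j\<in>{1..n}. i \<le> j \<longrightarrow> real (p i) / real (w i) \<le> real (p j) / real (w j)"
    and T12: "T1 < T2"
    and late_exists: "\<exists>j\<in>{1..n}. C_orig p j > T1"
    and pmin: "Min (p ` {1..n}) \<le> T1"
    and T1_lt: "T1 < (\<Sum>j\<in>{1..n}. p j)"
    and T2_k: "int T2 - int (S_orig p (LEAST j. j \<in> {1..n} \<and> C_orig p j > T1)) \<le> k"
    and feas: "\<exists>S. feasible n p T1 T2 k S"
  shows "\<exists>S. optimal n p w T1 T2 k S \<and>
           (has_idle_period n p T1 S \<longrightarrow> Delta_max n p S = real_of_int k)"
proof -
  have n1: "n \<ge> 1" using late_exists by auto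
  define K where "K = real_of_int k"
  have feas_iff: "feasible n p T1 T2 k S \<longleftrightarrow> valid_schedule n p T1 T2 S \<and> (\<forall>j\<in>{1..n}. Delta p S j \<le> K)" for S
    unfolding feasible_def K_def using Dmax_le[OF n1] by blast
  define Z where "Z S = (\<lambda>j. if j \<in> {1..n} then S j else 0)" for S :: "nat \<Rightarrow> real"
  have Zfeas: "feasible n p T1 T2 k (Z S) \<longleftrightarrow> feasible n p T1 T2 k S" for S
    unfolding feas_iff valid_schedule_def Delta_def compl_def Z_def by auto
  have Zwct: "wct n p w (Z S) = wct n p w S" for S
    unfolding wct_def compl_def Z_def by (intro sum.cong) auto
  define F where "F = {S::nat\<Rightarrow>real. valid_schedule n p T1 T2 S \<and> (\<forall>j\<in>{1..n}. Delta p S j \<le> K) \<and> (\<forall>j. j \<notin> {1..n} \<longrightarrow> S j = 0)}"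
  have ZF: "Z S \<in> F" if "feasible n p T1 T2 k S" for S
    using Zfeas[of S] that unfolding F_def feas_iff by (auto simp: Z_def)
  define M where "M = real (\<Sum>j\<in>{1..n}. p j) + \<bar>K\<bar>"
  have FK: "F \<subseteq> Pi\<^sub>E UNIV (\<lambda>_::nat. {0..M})"
  proof
    fix S assume S: "S \<in> F"
    show "S \<in> Pi\<^sub>E UNIV (\<lambda>_::nat. {0..M})"
    proof (simp add: PiE_def Pi_def, intro allI)
      fix j show "0 \<le> S j \<and> S j \<le> M"
      proof (cases "j \<in> {1..n}")
        case False
        have "0 \<le> M" unfolding M_def by (simp add: sum_nonneg)
        then show ?thesis using S False unfolding F_def by auto
      next
        case True
        have "S j \<ge> 0" using S True unfolding F_def valid_schedule_def by auto
        moreover have "Delta p S j \<le> K" using S True unfolding F_def by auto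
        hence "S j + p j - C_orig p j \<le> K" unfolding Delta_def compl_def by auto
        moreover have "C_orig p j \<le> (\<Sum>j\<in>{1..n}. p j)" unfolding C_orig_def
          using True by (intro sum_mono2) auto
        ultimately show ?thesis unfolding M_def by linarith
      qed
    qed
  qed
  have cF: "compact F"
  proof -
    have "compact (F \<inter> Pi\<^sub>E UNIV (\<lambda>_::nat. {0..M}))"
      using closed_F[of n p T1 T2 K] cpt[of M] unfolding F_def[symmetric]
      by (intro closed_Int_compact)
    then show ?thesis using FK by (simp add: Int_absorb2)
  qed
  obtain S1 where "feasible n p T1 T2 k S1" using feas by blast
  hence Fne: "F \<noteq> {}" using ZF by blast
  have cont: "continuous_on F (wct n p w)"
    unfolding wct_def compl_def by (intro continuous_intros continuous_on_subset[OF cont_coord]) auto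
  obtain S0 where S0F: "S0 \<in> F" and S0min: "\<And>S. S \<in> F \<Longrightarrow> wct n p w S0 \<le> wct n p w S"
    using continuous_attains_inf[OF cF Fne cont] by blast
  have S0feas: "feasible n p T1 T2 k S0" using S0F unfolding F_def feas_iff by auto
  have opt: "optimal n p w T1 T2 k S0"
    unfolding optimal_def using S0feas S0min ZF Zwct by metis
  have "Delta_max n p S0 = K" if hip: "has_idle_period n p T1 S0"
  proof (rule ccontr)
    assume ne: "Delta_max n p S0 \<noteq> K"
    have val: "valid_schedule n p T1 T2 S0" and DK: "Delta_max n p S0 \<le> K"
      using S0feas unfolding feasible_def K_def by auto
    obtain a b where ip: "idle_period n p T1 S0 a b" using hip unfolding has_idle_period_def by blast
    have a0: "0 \<le> a" and ab: "a < b" using ip unfolding idle_period_def by auto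
    obtain j1 where j1n: "j1 \<in> {1..n}" and Sj1: "S0 j1 = b" and cj1: "compl p S0 j1 \<le> real T1"
      and oth: "\<forall>i\<in>{1..n}. i \<noteq> j1 \<longrightarrow> compl p S0 i \<le> a \<or> compl p S0 j1 \<le> S0 i"
      using idle_shift[OF val p_pos T12 ip] by blast
    define d where "d = K - Delta_max n p S0"
    have dpos: "d > 0" using ne DK unfolding d_def by auto
    define e where "e = min d (b - a)"
    have epos: "e > 0" using dpos ab unfolding e_def by auto
    define S' where "S' = S0(j1 := b - e)"
    have cS': "compl p S' j = (if j = j1 then compl p S0 j1 - e else compl p S0 j)" for j
      unfolding S'_def compl_def using Sj1 by auto
    have valS': "valid_schedule n p T1 T2 S'"
      unfolding valid_schedule_def
    proof (intro conjI ballI impI)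
      fix j assume "j \<in> {1..n}"
      then show "S' j \<ge> 0" using val a0 unfolding S'_def e_def valid_schedule_def by auto
    next
      fix i j assume i: "i \<in> {1..n}" and j: "j \<in> {1..n}" and ij: "i \<noteq> j"
      show "compl p S' i \<le> S' j \<or> compl p S' j \<le> S' i"
      proof (cases "i = j1 \<or> j = j1")
        case False then show ?thesis using val i j ij cS' unfolding valid_schedule_def S'_def by auto
      next
        case True
        have "b - e \<ge> a" unfolding e_def by auto
        then show ?thesis using True oth i j ij cS' epos unfolding S'_def by auto
      qed
    next
      fix j assume j: "j \<in> {1..n}"
      show "compl p S' j \<le> real T1 \<or> real T2 \<le> S' j"
        using val j cS' cj1 epos unfolding valid_schedule_def S'_def by (cases "j = j1") auto
    qed
    have DS': "\<forall>j\<in>{1..n}. Delta p S' j \<le> K"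
    proof
      fix j assume j: "j \<in> {1..n}"
      have D0: "Delta p S0 j \<le> Delta_max n p S0" using Dmax_ge[OF j] .
      show "Delta p S' j \<le> K"
      proof (cases "j = j1")
        case True
        have "Delta p S' j \<le> Delta p S0 j + e" unfolding Delta_def using cS' True epos by auto
        also have "\<dots> \<le> K" using D0 unfolding d_def e_def by auto
        finally show ?thesis .
      next
        case False then show ?thesis using D0 DK cS' unfolding Delta_def by auto
      qed
    qed
    have "feasible n p T1 T2 k S'" using valS' DS' feas_iff by blast
    hence le: "wct n p w S0 \<le> wct n p w S'" using opt unfolding optimal_def by blast
    have "wct n p w S' = (\<Sum>j\<in>{1..n}. real (w j) * compl p S0 j - (if j = j1 then real (w j1) * e else 0))"
      unfolding wct_def by (intro sum.cong) (auto simp: cS' algebra_simps)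
    also have "\<dots> = wct n p w S0 - real (w j1) * e"
      unfolding wct_def using j1n by (simp add: sum_subtractf)
    finally have "wct n p w S' = wct n p w S0 - real (w j1) * e" .
    moreover have "real (w j1) * e > 0" using w_pos j1n epos by auto
    ultimately show False using le by auto
  qed
  then show ?thesis using opt unfolding K_def by blast
qed

end
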